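(* Let $(B,\lfloor\cdot,\cdot\rfloor)$ be an SSD space with quadratic form $q$ and let $A\subset B$ be $q$-positive. Then $\operatorname{conv}A\subset \operatorname{dom}\Phi_A^{@}\subset \operatorname{conv}^w A$.
   Context: An SSD space is a pair $(B,\lfloor\cdot,\cdot\rfloor)$ with $B$ a nonzero real vector space and $\lfloor\cdot,\cdot\rfloor$ a symmetric bilinear form; $q(b)=\frac12\lfloor b,b\rfloor$. $w(B,B)$ is the coarsest topology on $B$ making all maps $b\mapsto\lfloor b,c\rfloor$ continuous, and $\operatorname{conv}^w A$ is the $w(B,B)$-closure of the convex hull $\operatorname{conv}A$. A nonempty $A\subset B$ is $q$-positive if $q(b-c)\ge0$ for all $b,c\in A$. $\Phi_A(x)=\sup_{a\in A}\{\lfloor x,a\rfloor-q(a)\}$; $\Phi_A^{@}(b)=\sup_{c\in B}\{\lfloor c,b\rfloor-\Phi_A(c)\}$; $\operatorname{dom}g=\{x: g(x)<+\infty\}$. *)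

theory Defs
  imports "HOL-Analysis.Analysis"
begin

definition SSD :: "('b::real_vector \<Rightarrow> 'b \<Rightarrow> real) \<Rightarrow> bool" where
  "SSD s \<longleftrightarrow> (\<exists>b::'b. b \<noteq> 0) \<and> (\<forall>c. linear (\<lambda>b. s b c))
      \<and> (\<forall>b c. s b c = s c b)"

definition qf :: "('b::real_vector \<Rightarrow> 'b \<Rightarrow> real) \<Rightarrow> 'b \<Rightarrow> real" where
  "qf s b = s b b / 2"

definition q_positive :: "('b::real_vector \<Rightarrow> 'b \<Rightarrow> real) \<Rightarrow> 'b set \<Rightarrow> bool" where
  "q_positive s A \<longleftrightarrow> A \<noteq> {} \<and> (\<forall>b\<in>A. \<forall>c\<in>A. qf s (b - c) \<ge> 0)"

text \<open>w(B,B): coarsest topology making all maps b \<mapsto> s b c continuous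
  (generated by the preimages of open sets of the reals).\<close>
definition wtop :: "('b::real_vector \<Rightarrow> 'b \<Rightarrow> real) \<Rightarrow> 'b topology" where
  "wtop s = topology_generated_by {{b. s b c \<in> U} | c U. open U}"

definition conv_w :: "('b::real_vector \<Rightarrow> 'b \<Rightarrow> real) \<Rightarrow> 'b set \<Rightarrow> 'b set" where
  "conv_w s A = (wtop s) closure_of (convex hull A)"

definition Phi :: "('b::real_vector \<Rightarrow> 'b \<Rightarrow> real) \<Rightarrow> 'b set \<Rightarrow> 'b \<Rightarrow> ereal" where
  "Phi s A x = (SUP a\<in>A. ereal (s x a - qf s a))"

definition Phi_at :: "('b::real_vector \<Rightarrow> 'b \<Rightarrow> real) \<Rightarrow> 'b set \<Rightarrow> 'b \<Rightarrow> ereal" where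
  "Phi_at s A b = (SUP c. ereal (s c b) - Phi s A c)"

definition dom_fun :: "('b \<Rightarrow> ereal) \<Rightarrow> 'b set" where
  "dom_fun g = {x. g x < \<infinity>}"

end

theory Submission
  imports Defs
begin

lemma nonneg_from_small_t:
  fixes P Q :: real
  assumes Q: "0 \<le> Q" and h: "\<And>t. 0 < t \<Longrightarrow> t \<le> 1 \<Longrightarrow> 0 \<le> 2*P + t*Q"
  shows "0 \<le> P"
proof (rule ccontr)
  assume "\<not> 0 \<le> P"
  hence P: "P < 0" by simp
  define t where "t = min 1 (-P/(Q+1))"
  have "P/(Q+1) < 0" using P Q by (intro divide_neg_pos) auto
  hence t0: "0 < t" by (simp add: t_def)
  have t1: "t \<le> 1" by (simp add: t_def)
  have "t \<le> -P/(Q+1)" by (simp add: t_def)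
  hence "t*Q \<le> (-P/(Q+1))*Q" using Q by (intro mult_right_mono)
  also have "\<dots> < -P" using P Q by (simp add: field_simps)
  finally have "2*P + t*Q < 0" using P by linarith
  with h[OF t0 t1] show False by simp
qed

lemma min_norm_sep:
  fixes K :: "('i \<Rightarrow> real) set" and C :: "'i set"
  assumes fin: "finite C" and ne: "K \<noteq> {}"
  and cvx: "\<And>k l t. k\<in>K \<Longrightarrow> l\<in>K \<Longrightarrow> 0\<le>t \<Longrightarrow> t\<le>1 \<Longrightarrow> (\<lambda>i. (1-t)*k i + t*l i) \<in> K"
  and pos: "\<And>k. k\<in>K \<Longrightarrow> e \<le> (\<Sum>i\<in>C. (k i)^2)" and e: "0<e"
  shows "\<exists>y. \<forall>k\<in>K. e \<le> (\<Sum>i\<in>C. y i * k i)"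
proof -
  define N where "N = (\<lambda>k::'i\<Rightarrow>real. \<Sum>i\<in>C. (k i)^2)"
  define \<delta> where "\<delta> = Inf (N ` K)"
  have bdd: "bdd_below (N ` K)" by (rule bdd_belowI[of _ e]) (auto simp: N_def pos)
  have Nge: "\<delta> \<le> N k" if "k \<in> K" for k
    unfolding \<delta>_def using bdd that by (simp add: cInf_lower)
  have de: "e \<le> \<delta>" unfolding \<delta>_def using ne pos
    by (auto intro!: cInf_greatest simp: N_def)
  have "\<exists>k\<in>K. N k < \<delta> + 1/(real m+1)" for m
  proof -
    have "Inf (N ` K) < \<delta> + 1/(real m+1)" unfolding \<delta>_def by (simp add: add_pos_pos)
    then obtain v where "v \<in> N ` K" "v < \<delta> + 1/(real m+1)"
      using cInf_lessD[of "N ` K"] ne by blast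
    then show ?thesis by blast
  qed
  then obtain y where yK: "\<And>m. y m \<in> K" and yN: "\<And>m. N (y m) < \<delta> + 1/(real m+1)"
    by metis
  have par: "N (\<lambda>i. y m i - y l i) \<le> 2/(real m+1) + 2/(real l+1)" for m l
  proof -
    have mid: "(\<lambda>i. (1-1/2)*y m i + (1/2)*y l i) \<in> K" using cvx[OF yK yK, of "1/2"] by simp
    have id: "N (\<lambda>i. y m i - y l i) = 2*N (y m) + 2*N (y l) - 4 * N (\<lambda>i. (1-1/2)*y m i + (1/2)*y l i)"
      unfolding N_def by (simp add: sum_distrib_left sum_subtractf[symmetric] sum.distrib[symmetric] power2_eq_square algebra_simps)
    show ?thesis using id Nge[OF mid] yN[of m] yN[of l] by linarith
  qed
  have coord: "(y m i - y l i)^2 \<le> 2/(real m+1) + 2/(real l+1)" if "i \<in> C" for m l i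
  proof -
    have "(y m i - y l i)^2 \<le> N (\<lambda>i. y m i - y l i)"
      unfolding N_def using fin that by (intro member_le_sum) auto
    then show ?thesis using par[of m l] by linarith
  qed
  have cau: "Cauchy (\<lambda>m. y m i)" if "i \<in> C" for i
  proof (rule CauchyI)
    fix r :: real assume r: "0 < r"
    obtain M :: nat where M: "4 / r^2 < real M" using reals_Archimedean2 by blast
    have "\<forall>m\<ge>M. \<forall>n\<ge>M. norm (y m i - y n i) < r"
    proof (intro allI impI)
      fix m n assume mn: "M \<le> m" "M \<le> n"
      have r2: "0 < r^2" using r by simp
      have "4 / r^2 < real M + 1" using M by simp
      hence "4 < r^2 * (real M + 1)" using r2 by (simp add: field_simps)
      hence hM: "4 / (real M + 1) < r^2" by (simp add: field_simps)
      have "2/(real m+1) \<le> 2/(real M+1)" using mn by (simp add: frac_le)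
      moreover have "2/(real n+1) \<le> 2/(real M+1)" using mn by (simp add: frac_le)
      ultimately have "(y m i - y n i)^2 < r^2" using coord[OF that, of m n] hM by linarith
      hence "\<bar>y m i - y n i\<bar>^2 < r^2" by simp
      hence "\<bar>y m i - y n i\<bar> < r" by (rule power2_less_imp_less) (use r in simp_all)
      then show "norm (y m i - y n i) < r" by simp
    qed
    then show "\<exists>M. \<forall>m\<ge>M. \<forall>n\<ge>M. norm (y m i - y n i) < r" by blast
  qed
  define z where "z i = lim (\<lambda>m. y m i)" for i
  have lz: "(\<lambda>m. y m i) \<longlonglongrightarrow> z i" if "i \<in> C" for i
    using cau[OF that] unfolding z_def by (simp add: Cauchy_convergent_iff convergent_LIMSEQ_iff)
  have Nz_le: "N z \<le> \<delta>"
  proof -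
    have "(\<lambda>m. N (y m)) \<longlonglongrightarrow> N z" unfolding N_def
      by (intro tendsto_sum tendsto_power lz)
    moreover have "(\<lambda>m. \<delta> + 1/(real m+1)) \<longlonglongrightarrow> \<delta> + 0"
      by (intro tendsto_add tendsto_const) (use LIMSEQ_inverse_real_of_nat in \<open>simp add: inverse_eq_divide add.commute\<close>)
    ultimately show ?thesis using yN
      by (intro LIMSEQ_le[of "\<lambda>m. N (y m)" _ "\<lambda>m. \<delta> + 1/(real m+1)"]) (auto intro: less_imp_le)
  qed
  show ?thesis
  proof (intro exI ballI)
    fix k assume kK: "k \<in> K"
    define P where "P = (\<Sum>i\<in>C. z i * (k i - z i))"
    define Q where "Q = (\<Sum>i\<in>C. (k i - z i)^2)"
    have Q0: "0 \<le> Q" unfolding Q_def by (simp add: sum_nonneg)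
    have "0 \<le> 2*P + t*Q" if t: "0 < t" "t \<le> 1" for t
    proof -
      have "(\<lambda>m. N (\<lambda>i. (1-t)*y m i + t*k i)) \<longlonglongrightarrow> N (\<lambda>i. (1-t)*z i + t*k i)" unfolding N_def
        by (intro tendsto_sum tendsto_power tendsto_add tendsto_mult tendsto_const lz) 
      moreover have "\<delta> \<le> N (\<lambda>i. (1-t)*y m i + t*k i)" for m
        using Nge[OF cvx[OF yK kK, of t]] t by simp
      ultimately have "\<delta> \<le> N (\<lambda>i. (1-t)*z i + t*k i)"
        by (intro LIMSEQ_le_const) auto
      moreover have "N (\<lambda>i. (1-t)*z i + t*k i) = N z + t * (2*P + t*Q)"
        unfolding N_def P_def Q_def
        by (simp add: sum_distrib_left sum.distrib[symmetric] power2_eq_square algebra_simps)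
      ultimately have "0 \<le> t * (2*P + t*Q)" using Nz_le by linarith
      then show ?thesis using t by (simp add: zero_le_mult_iff)
    qed
    hence "0 \<le> P" by (rule nonneg_from_small_t[OF Q0])
    moreover have "(\<Sum>i\<in>C. z i * k i) = P + N z"
      unfolding P_def N_def by (simp add: sum.distrib[symmetric] power2_eq_square algebra_simps)
    moreover have "\<delta> \<le> N z"
    proof -
      have "(\<lambda>m. N (y m)) \<longlonglongrightarrow> N z" unfolding N_def
        by (intro tendsto_sum tendsto_power lz)
      then show ?thesis using Nge[OF yK] by (intro LIMSEQ_le_const) auto
    qed
    ultimately show "e \<le> (\<Sum>i\<in>C. z i * k i)" using de by linarith
  qed
qed


lemma ssd_facts:
  assumes "SSD s"
  shows "s (x + y) c = s x c + s y c" "s (x - y) c = s x c - s y c" "s (r *\<^sub>R x) c = r * s x c"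
    "s (sum f S) c = (\<Sum>i\<in>S. s (f i) c)" "s x y = s y x"
proof -
  have l: "linear (\<lambda>b. s b c)" and sy: "\<And>b c. s b c = s c b" using assms unfolding SSD_def by auto
  show "s (x + y) c = s x c + s y c" using linear_add[OF l] .
  show "s (x - y) c = s x c - s y c" using linear_diff[OF l] .
  show "s (r *\<^sub>R x) c = r * s x c" using linear_scale[OF l] by simp
  show "s (sum f S) c = (\<Sum>i\<in>S. s (f i) c)" using linear_sum[OF l] by (simp add: o_def)
  show "s x y = s y x" using sy .
qed

lemma box_lemma:
  fixes s :: "'b \<Rightarrow> 'c \<Rightarrow> real"
  assumes "generate_topology_on {{b. s b c \<in> U} |c U. open U} T"
  shows "\<forall>x\<in>T. \<exists>C \<epsilon>. finite C \<and> 0<\<epsilon> \<and> {y. \<forall>c\<in>C. \<bar>s y c - s x c\<bar> < \<epsilon>} \<subseteq> T"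
  using assms
proof (induction rule: generate_topology_on.induct)
  case Empty
  then show ?case by simp
next
  case (Int a b)
  show ?case
  proof
    fix x assume "x \<in> a \<inter> b"
    hence xa: "x \<in> a" and xb: "x \<in> b" by auto
    obtain C1 e1 where 1: "finite C1" "0<e1" "{y. \<forall>c\<in>C1. \<bar>s y c - s x c\<bar> < e1} \<subseteq> a"
      using Int.IH(1) xa by (elim ballE exE conjE) auto
    obtain C2 e2 where 2: "finite C2" "0<e2" "{y. \<forall>c\<in>C2. \<bar>s y c - s x c\<bar> < e2} \<subseteq> b"
      using Int.IH(2) xb by (elim ballE exE conjE) auto
    show "\<exists>C \<epsilon>. finite C \<and> 0<\<epsilon> \<and> {y. \<forall>c\<in>C. \<bar>s y c - s x c\<bar> < \<epsilon>} \<subseteq> a \<inter> b"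
    proof (intro exI conjI)
      show "finite (C1 \<union> C2)" using 1(1) 2(1) by simp
      show "0 < min e1 e2" unfolding min_def using 1(2) 2(2) by auto
      have "{y. \<forall>c\<in>C1 \<union> C2. \<bar>s y c - s x c\<bar> < min e1 e2} \<subseteq> {y. \<forall>c\<in>C1. \<bar>s y c - s x c\<bar> < e1}" by force
      moreover have "{y. \<forall>c\<in>C1 \<union> C2. \<bar>s y c - s x c\<bar> < min e1 e2} \<subseteq> {y. \<forall>c\<in>C2. \<bar>s y c - s x c\<bar> < e2}" by force
      ultimately show "{y. \<forall>c\<in>C1 \<union> C2. \<bar>s y c - s x c\<bar> < min e1 e2} \<subseteq> a \<inter> b"
        using 1(3) 2(3) by blast
    qed
  qed
next
  case (UN K)
  show ?case
  proof
    fix x assume "x \<in> \<Union>K"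
    then obtain k where "k \<in> K" "x \<in> k" by blast
    then obtain C e where "finite C" "0<e" "{y. \<forall>c\<in>C. \<bar>s y c - s x c\<bar> < e} \<subseteq> k"
      using UN.IH[OF \<open>k \<in> K\<close>] \<open>x \<in> k\<close> by blast
    moreover have "k \<subseteq> \<Union>K" using \<open>k \<in> K\<close> by auto
    ultimately show "\<exists>C \<epsilon>. finite C \<and> 0<\<epsilon> \<and> {y. \<forall>c\<in>C. \<bar>s y c - s x c\<bar> < \<epsilon>} \<subseteq> \<Union>K"
      by (intro exI[of _ C] exI[of _ e]) auto
  qed
next
  case (Basis T)
  then have "\<exists>c U. T = {b. s b c \<in> U} \<and> open U" by (simp only: mem_Collect_eq)
  then obtain c U where T: "T = {b. s b c \<in> U}" and U: "open U" by (elim exE conjE)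
  show ?case
  proof
    fix x assume "x \<in> T"
    hence "s x c \<in> U" using T by simp
    then obtain e where e: "0 < e" "ball (s x c) e \<subseteq> U" using U openE by blast
    show "\<exists>C \<epsilon>. finite C \<and> 0<\<epsilon> \<and> {y. \<forall>c\<in>C. \<bar>s y c - s x c\<bar> < \<epsilon>} \<subseteq> T"
    proof (intro exI conjI)
      show "finite {c}" by simp
      show "0 < e" by (rule e(1))
      show "{y. \<forall>c'\<in>{c}. \<bar>s y c' - s x c'\<bar> < e} \<subseteq> T"
      proof
        fix y assume "y \<in> {y. \<forall>c'\<in>{c}. \<bar>s y c' - s x c'\<bar> < e}"
        hence "\<bar>s y c - s x c\<bar> < e" by simp
        hence "s y c \<in> ball (s x c) e" by (simp add: dist_real_def abs_minus_commute)
        thus "y \<in> T" using e(2) T by blast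
      qed
    qed
  qed
qed

lemma part1:
  assumes ssd: "SSD s" and b: "b \<in> convex hull A"
  shows "b \<in> dom_fun (Phi_at s A)"
proof -
  obtain S u where S: "finite S" "S \<subseteq> A" "\<forall>x\<in>S. 0 \<le> u x" "sum u S = 1"
    and bS: "(\<Sum>v\<in>S. u v *\<^sub>R v) = b"
    using b unfolding convex_hull_explicit by blast
  have Sne: "S \<noteq> {}" using S(4) by auto
  define R where "R = (\<Sum>a\<in>S. u a * qf s a)"
  have "ereal (s c b) - Phi s A c \<le> ereal R" for c
  proof -
    define v where "v a = s c a - qf s a" for a
    define m where "m = Max (v ` S)"
    have mS: "m \<in> v ` S" unfolding m_def using S(1) Sne by (intro Max_in) auto
    then obtain a' where a': "a' \<in> S" "m = v a'" by blast
    have vle: "v a \<le> m" if "a \<in> S" for a unfolding m_def using S(1) that by (intro Max_ge) auto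
    have "s c b = (\<Sum>a\<in>S. u a * s c a)"
    proof -
      have "s c b = s b c" by (rule ssd_facts(5)[OF ssd])
      also have "\<dots> = (\<Sum>a\<in>S. s (u a *\<^sub>R a) c)" unfolding bS[symmetric] by (rule ssd_facts(4)[OF ssd])
      also have "\<dots> = (\<Sum>a\<in>S. u a * s c a)"
        by (intro sum.cong refl) (metis ssd_facts(3)[OF ssd] ssd_facts(5)[OF ssd])
      finally show ?thesis .
    qed
    hence "s c b - R = (\<Sum>a\<in>S. u a * v a)"
      unfolding R_def v_def by (simp add: sum_subtractf[symmetric] algebra_simps)
    also have "\<dots> \<le> (\<Sum>a\<in>S. u a * m)"
      using S(3) vle by (intro sum_mono mult_left_mono) auto
    also have "\<dots> = m" using S(4) by (simp add: sum_distrib_right[symmetric])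
    finally have 1: "s c b - R \<le> m" .
    have "ereal m \<le> Phi s A c" unfolding Phi_def a'(2) v_def
      using a'(1) S(2) by (intro SUP_upper2[of a']) auto
    hence "ereal (s c b - R) \<le> Phi s A c" using 1 by (meson ereal_less_eq(3) order_trans)
    then show ?thesis by (cases "Phi s A c") auto
  qed
  hence "Phi_at s A b \<le> ereal R" unfolding Phi_at_def by (intro SUP_least) auto
  then show ?thesis unfolding dom_fun_def by (auto simp: le_less_trans)
qed


lemma part2:
  fixes s :: "'b::real_vector \<Rightarrow> 'b \<Rightarrow> real"
  assumes ssd: "SSD s" and qp: "q_positive s A" and bd: "b \<in> dom_fun (Phi_at s A)"
  shows "b \<in> conv_w s A"
proof (rule ccontr)
  assume nb: "b \<notin> conv_w s A"
  let ?S = "{{b. s b c \<in> U} |c U. open U}"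
  have "UNIV \<in> ?S" by (rule CollectI, rule exI[of _ 0], rule exI[of _ UNIV]) auto
  hence top: "topspace (wtop s) = UNIV" unfolding wtop_def by auto
  obtain T where T: "b \<in> T" "openin (wtop s) T" "T \<inter> convex hull A = {}"
    using nb unfolding conv_w_def in_closure_of top by blast
  have "generate_topology_on ?S T" using T(2) unfolding wtop_def
    by (simp add: openin_topology_generated_by_iff)
  from box_lemma[OF this] T(1) obtain C \<epsilon> where C: "finite C" "0 < \<epsilon>"
    "{y. \<forall>c\<in>C. \<bar>s y c - s b c\<bar> < \<epsilon>} \<subseteq> T" by blast
  have far: "\<exists>c\<in>C. \<epsilon> \<le> \<bar>s x c - s b c\<bar>" if "x \<in> convex hull A" for x
  proof (rule ccontr)
    assume "\<not> ?thesis"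
    hence "x \<in> T" using C(3) by force
    with T(3) that show False by blast
  qed
  obtain a0 where a0: "a0 \<in> A" using qp unfolding q_positive_def by blast
  define K where "K = (\<lambda>x. \<lambda>c. s x c - s b c) ` (convex hull A)"
  have "\<exists>y. \<forall>k\<in>K. \<epsilon>^2 \<le> (\<Sum>i\<in>C. y i * k i)"
  proof (rule min_norm_sep[OF C(1)])
    show "K \<noteq> {}" unfolding K_def using a0 hull_subset[of A convex] by blast
    show "0 < \<epsilon>^2" using C(2) by simp
    show "(\<lambda>i. (1-t)*k i + t*l i) \<in> K" if kl: "k\<in>K" "l\<in>K" and tt: "0\<le>t" "t\<le>1" for k l t
    proof -
      obtain x x' where x: "x \<in> convex hull A" "k = (\<lambda>c. s x c - s b c)"
        and x': "x' \<in> convex hull A" "l = (\<lambda>c. s x' c - s b c)" using kl unfolding K_def by blast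
      have "(1-t) *\<^sub>R x + t *\<^sub>R x' \<in> convex hull A"
        using convexD_alt[OF convex_convex_hull x(1) x'(1)] tt by simp
      moreover have "(\<lambda>i. (1-t)*k i + t*l i) = (\<lambda>c. s ((1-t) *\<^sub>R x + t *\<^sub>R x') c - s b c)"
        unfolding x x' by (rule ext, simp only: ssd_facts(1,3)[OF ssd]) (simp add: algebra_simps)
      ultimately show ?thesis unfolding K_def by blast
    qed
    show "\<epsilon>^2 \<le> (\<Sum>i\<in>C. (k i)^2)" if kK: "k \<in> K" for k
    proof -
      obtain x where x: "x \<in> convex hull A" "k = (\<lambda>c. s x c - s b c)" using kK unfolding K_def by blast
      obtain c where c: "c \<in> C" "\<epsilon> \<le> \<bar>s x c - s b c\<bar>" using far[OF x(1)] by blast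
      have "\<epsilon>^2 \<le> \<bar>s x c - s b c\<bar>^2" using c(2) C(2) by (intro power_mono) auto
      also have "\<dots> = (k c)^2" using x(2) by simp
      also have "\<dots> \<le> (\<Sum>i\<in>C. (k i)^2)" using C(1) c(1) by (intro member_le_sum) auto
      finally show ?thesis .
    qed
  qed
  then obtain y where y: "\<And>k. k\<in>K \<Longrightarrow> \<epsilon>^2 \<le> (\<Sum>i\<in>C. y i * k i)" by blast
  define g where "g = (\<Sum>c\<in>C. y c *\<^sub>R c)"
  have sg: "s x g = (\<Sum>c\<in>C. y c * s x c)" for x
  proof -
    have "s x g = s g x" by (rule ssd_facts(5)[OF ssd])
    also have "\<dots> = (\<Sum>c\<in>C. s (y c *\<^sub>R c) x)" unfolding g_def by (rule ssd_facts(4)[OF ssd])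
    also have "\<dots> = (\<Sum>c\<in>C. y c * s x c)"
      by (intro sum.cong refl) (metis ssd_facts(3)[OF ssd] ssd_facts(5)[OF ssd])
    finally show ?thesis .
  qed
  define e where "e = \<epsilon>^2"
  have gap: "s b g + e \<le> s a g" if "a \<in> A" for a
  proof -
    have "(\<lambda>c. s a c - s b c) \<in> K" unfolding K_def using that hull_subset[of A convex] by blast
    from y[OF this] have "e \<le> (\<Sum>c\<in>C. y c * (s a c - s b c))" by (simp add: e_def)
    also have "\<dots> = s a g - s b g" unfolding sg by (simp add: sum_subtractf[symmetric] algebra_simps)
    finally show ?thesis by simp
  qed
  have e0: "0 < e" using C(2) by (simp add: e_def)
  have "Phi_at s A b = \<infinity>"
  proof (rule ereal_top)
    fix M :: real
    define lam where "lam = max 0 ((M - s a0 b + qf s a0) / e)"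
    have lam0: "0 \<le> lam" by (simp add: lam_def)
    have lamM: "M \<le> lam * e + s a0 b - qf s a0"
    proof -
      have "(M - s a0 b + qf s a0) / e \<le> lam" by (simp add: lam_def)
      hence "M - s a0 b + qf s a0 \<le> lam * e" using e0 by (simp add: divide_le_eq)
      thus ?thesis by simp
    qed
    define x where "x = a0 - lam *\<^sub>R g"
    have bound: "s x a - qf s a \<le> qf s a0 - lam * (s b g + e)" if "a \<in> A" for a
    proof -
      have "0 \<le> qf s (a - a0)" using qp that a0 unfolding q_positive_def by blast
      hence "0 \<le> s (a - a0) (a - a0)" by (simp add: qf_def)
      also have "s (a - a0) (a - a0) = s a a - 2 * s a0 a + s a0 a0"
        using ssd_facts(2)[OF ssd] ssd_facts(5)[OF ssd, of a a0] ssd_facts(5)[OF ssd, of "a - a0" a]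
          ssd_facts(5)[OF ssd, of "a - a0" a0] by simp
      finally have q: "s a0 a - qf s a \<le> qf s a0" by (simp add: qf_def)
      have "s x a = s a0 a - lam * s a g"
        unfolding x_def using ssd_facts(2,3)[OF ssd] ssd_facts(5)[OF ssd, of g a] by simp
      moreover have "lam * (s b g + e) \<le> lam * s a g" using gap[OF that] lam0 by (intro mult_left_mono)
      ultimately show ?thesis using q by linarith
    qed
    have Pb: "Phi s A x \<le> ereal (qf s a0 - lam * (s b g + e))"
      unfolding Phi_def using bound by (intro SUP_least) auto
    have sxb: "s x b = s a0 b - lam * s b g"
      unfolding x_def using ssd_facts(2,3)[OF ssd] ssd_facts(5)[OF ssd, of g b] by simp
    have "ereal M \<le> ereal (s a0 b - qf s a0 + lam * e)" using lamM by simp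
    also have "\<dots> \<le> ereal (s x b) - Phi s A x"
    proof (cases "Phi s A x")
      case (real r)
      with Pb have "r \<le> qf s a0 - lam * (s b g + e)" by simp
      hence "s a0 b - qf s a0 + lam * e \<le> s x b - r" unfolding sxb distrib_left by linarith
      then show ?thesis using real by simp
    next
      case PInf with Pb show ?thesis by simp
    next
      case MInf then show ?thesis by simp
    qed
    also have "\<dots> \<le> Phi_at s A b" unfolding Phi_at_def by (rule SUP_upper) simp
    finally show "ereal M \<le> Phi_at s A b" .
  qed
  with bd show False unfolding dom_fun_def by simp
qed

theorem mainTheorem9:
  fixes s :: "'b::real_vector \<Rightarrow> 'b \<Rightarrow> real" and A :: "'b set"
  assumes "SSD s" and "q_positive s A"
  shows "convex hull A \<subseteq> dom_fun (Phi_at s A) \<and> dom_fun (Phi_at s A) \<subseteq> conv_w s A"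
  using part1[OF assms(1)] part2[OF assms] by blast

end
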